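(* Let $n\ge 2$ be an integer, let $\log$ denote the base-$2$ logarithm, let $0<\gamma<1/2$, and for every integer $i\ge 0$ define $$\varepsilon^{(i)}=\frac{\gamma^{i+1}}{10\log(n)\,(i+1)^2}.$$ Then for every integer $k\ge 0$, $$\sum_{\substack{i,j\ge 0\\ i+j=k}} \varepsilon^{(i)}\varepsilon^{(j)}+\sum_{\substack{i,j\ge 0\\ i+j=k-1}} \varepsilon^{(i)}\varepsilon^{(j)} \le \frac{\varepsilon^{(k)}}{\log(n)}.$$ (An empty sum, e.g. the second sum when $k=0$, equals $0$.) *)

theory Defs
  imports Complex_Main
begin

definition eps :: "real \<Rightarrow> nat \<Rightarrow> nat \<Rightarrow> real" where
  "eps \<gamma> n i = \<gamma> ^ (i + 1) / (10 * log 2 (real n) * (real i + 1)^2)"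

end

theory Submission
  imports Defs
begin

lemma inv_sq_sum_aux: "N \<ge> 1 \<Longrightarrow> (\<Sum>a<N. 1 / (real a + 1)^2) \<le> 5/3 - 2/(2 * real N + 1)"
proof (induction N rule: dec_induct)
  case base then show ?case by simp
next
  case (step N)
  have "1 / (real N + 1)^2 \<le> 2/(2 * real N + 1) - 2/(2 * real (Suc N) + 1)"
  proof -
    have e: "2/(2 * real N + 1) - 2/(2 * real (Suc N) + 1) = 4 / ((2 * real N + 1) * (2 * real N + 3))"
      by (simp add: field_simps)
    have p: "0 < (2 * real N + 1) * (2 * real N + 3)" by simp
    have q: "(2 * real N + 1) * (2 * real N + 3) \<le> 4 * (real N + 1)^2"
      by (simp add: power2_eq_square algebra_simps)
    have "1 / (real N + 1)^2 = 4 / (4 * (real N + 1)^2)" by simp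
    also have "\<dots> \<le> 4 / ((2 * real N + 1) * (2 * real N + 3))"
      by (rule divide_left_mono[OF q]) (use p in auto)
    finally have "1 / (real N + 1)^2 \<le> 4 / ((2 * real N + 1) * (2 * real N + 3))" .
    then show ?thesis using e by simp
  qed
  then show ?case using step by simp
qed

lemma inv_sq_sum: "(\<Sum>a<N. 1 / (real a + 1)^2) \<le> 5/3"
proof (cases "N \<ge> 1")
  case True
  have "0 < 2/(2 * real N + 1)" by simp
  then show ?thesis using inv_sq_sum_aux[OF True] by linarith
qed (simp add: not_le)

lemma sq2: "(x + y)^2 \<le> 2*x^2 + 2*(y::real)^2"
proof -
  have "(x+y)^2 = 2*x^2+2*y^2 - (x-y)^2" by (simp add: power2_eq_square algebra_simps)
  moreover have "0 \<le> (x-y)^2" by simp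
  ultimately show ?thesis by linarith
qed

definition S :: "nat \<Rightarrow> real" where
  "S m = (\<Sum>i<m. 1 / ((real i + 1)^2 * (real (m - i))^2))"

lemma S_bound: "(real m + 1)^2 * S m \<le> 20/3"
proof -
  have trm: "(real m + 1)^2 * (1 / ((real i + 1)^2 * (real (m - i))^2))
      \<le> 2 / (real i + 1)^2 + 2 / (real (m - i - 1) + 1)^2" if "i < m" for i
  proof -
    define a where "a = real i + 1"
    define b where "b = real (m - i)"
    have ab: "real m + 1 = a + b" using that by (simp add: a_def b_def of_nat_diff)
    have b2: "real (m - i - 1) + 1 = b" using that by (simp add: b_def of_nat_diff)
    have a0: "a > 0" "b > 0" using that by (auto simp: a_def b_def)
    have "(a+b)^2 * (1/(a^2*b^2)) = (1/a + 1/b)^2"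
      using a0 by (simp add: field_simps power2_eq_square)
    also have "\<dots> \<le> 2*(1/a)^2 + 2*(1/b)^2"
      using sq2[of "1/a" "1/b"] by simp
    also have "\<dots> = 2/a^2 + 2/b^2" by (simp add: power_divide)
    finally show ?thesis unfolding ab b2 a_def[symmetric] b_def[symmetric] .
  qed
  have "(real m + 1)^2 * S m = (\<Sum>i<m. (real m + 1)^2 * (1 / ((real i + 1)^2 * (real (m - i))^2)))"
    by (simp add: S_def sum_distrib_left)
  also have "\<dots> \<le> (\<Sum>i<m. 2 / (real i + 1)^2 + 2 / (real (m - i - 1) + 1)^2)"
    by (rule sum_mono) (use trm in auto)
  also have "\<dots> = 2 * (\<Sum>i<m. 1 / (real i + 1)^2) + 2 * (\<Sum>i<m. 1 / (real (m - 1 - i) + 1)^2)"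
    by (simp add: sum.distrib sum_distrib_left)
  also have "(\<Sum>i<m. 1 / (real (m - 1 - i) + 1)^2) = (\<Sum>i<m. 1 / (real i + 1)^2)"
    using sum.nat_diff_reindex[of "\<lambda>i. 1 / (real i + 1)^2" m] by simp
  finally show ?thesis using inv_sq_sum[of m] by linarith
qed

lemma pair_sum:
  assumes L: "log 2 (real n) > 0"
  shows "(\<Sum>(i,j)\<in>{(i,j). i + j = m}. eps \<gamma> n i * eps \<gamma> n j)
     = \<gamma>^(m+2) / (100 * (log 2 (real n))^2) * S (m+1)"
proof -
  define L where "L = log 2 (real n)"
  have L0: "L > 0" using L by (simp add: L_def)
  have set: "{(i,j). i + j = m} = (\<lambda>i. (i, m - i)) ` {..<Suc m}" by force
  have inj: "inj_on (\<lambda>i. (i, m - i)) {..<Suc m}" by (auto simp: inj_on_def)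
  have "(\<Sum>(i,j)\<in>{(i,j). i + j = m}. eps \<gamma> n i * eps \<gamma> n j)
      = (\<Sum>i<Suc m. eps \<gamma> n i * eps \<gamma> n (m - i))"
    unfolding set by (subst sum.reindex[OF inj]) simp
  also have "\<dots> = (\<Sum>i<Suc m. \<gamma>^(m+2) / (100 * L^2) * (1 / ((real i + 1)^2 * (real (Suc m - i))^2)))"
  proof (rule sum.cong[OF refl])
    fix i assume "i \<in> {..<Suc m}"
    then have i: "i \<le> m" by simp
    have r: "real (Suc m - i) = real (m - i) + 1" using i by (simp add: Suc_diff_le)
    have g: "\<gamma>^(i+1) * \<gamma>^(m - i + 1) = \<gamma>^(m+2)"
      using i by (simp add: power_add[symmetric])
    show "eps \<gamma> n i * eps \<gamma> n (m - i) = \<gamma>^(m+2) / (100 * L^2) * (1 / ((real i + 1)^2 * (real (Suc m - i))^2))"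
      unfolding eps_def r L_def[symmetric] g[symmetric] using L0
      by (simp add: field_simps power2_eq_square)
  qed
  also have "\<dots> = \<gamma>^(m+2) / (100 * L^2) * S (m+1)"
    by (simp only: S_def sum_distrib_left Suc_eq_plus1)
  finally show ?thesis by (simp add: L_def)
qed

theorem lemma2p3:
  fixes n k :: nat and \<gamma> :: real
  assumes "n \<ge> 2" and "0 < \<gamma>" and "\<gamma> < 1/2"
  shows "(\<Sum>(i,j)\<in>{(i,j). i + j = k}. eps \<gamma> n i * eps \<gamma> n j)
       + (\<Sum>(i,j)\<in>{(i,j). i + j + 1 = k}. eps \<gamma> n i * eps \<gamma> n j)
       \<le> eps \<gamma> n k / log 2 (real n)"
proof -
  define L where "L = log 2 (real n)"
  have L1: "L \<ge> 1" using assms(1) by (simp add: L_def)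
  then have L0: "log 2 (real n) > 0" by (simp add: L_def)
  define T where "T = \<gamma>^(k+1) / (100 * L^2)"
  have T0: "T > 0" using L1 assms(2) by (simp add: T_def)
  define K where "K = (real k + 1)^2"
  have K0: "K > 0" by (simp add: K_def)
  have A: "(\<Sum>(i,j)\<in>{(i,j). i + j = k}. eps \<gamma> n i * eps \<gamma> n j) = T * \<gamma> * S (k+1)"
    unfolding pair_sum[OF L0] by (simp add: T_def L_def)
  have SB1: "K * S (k+1) \<le> 20/3"
  proof -
    have "(real (k+1) + 1)^2 * S (k+1) \<le> 20/3" by (rule S_bound)
    moreover have "K \<le> (real (k+1) + 1)^2" by (simp add: K_def power_mono)
    moreover have "S (k+1) \<ge> 0" by (simp add: S_def sum_nonneg)
    ultimately show ?thesis by (meson mult_right_mono order_trans)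
  qed
  have B: "(\<Sum>(i,j)\<in>{(i,j). i + j + 1 = k}. eps \<gamma> n i * eps \<gamma> n j) \<le> T * (20/3) / K"
  proof (cases k)
    case 0
    then have "{(i,j). i + j + 1 = k} = {}" by auto
    then show ?thesis using T0 K0 by simp
  next
    case (Suc k')
    have "{(i,j). i + j + 1 = k} = {(i,j). i + j = k'}" using Suc by auto
    then have "(\<Sum>(i,j)\<in>{(i,j). i + j + 1 = k}. eps \<gamma> n i * eps \<gamma> n j)
        = (\<Sum>(i,j)\<in>{(i,j). i + j = k'}. eps \<gamma> n i * eps \<gamma> n j)" by simp
    also have "\<dots> = T * S k"
      unfolding pair_sum[OF L0] using Suc by (simp add: T_def L_def)
    finally have "(\<Sum>(i,j)\<in>{(i,j). i + j + 1 = k}. eps \<gamma> n i * eps \<gamma> n j) = T * S k" .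
    moreover have "K * S k \<le> 20/3" using S_bound[of k] by (simp add: K_def)
    ultimately show ?thesis using T0 K0 by (simp add: field_simps)
  qed
  have R: "eps \<gamma> n k / log 2 (real n) = T * 10 / K"
    unfolding eps_def T_def K_def L_def[symmetric] using L1 by (simp add: field_simps power2_eq_square)
  have A2: "T * \<gamma> * S (k+1) \<le> T * (10/3) / K"
  proof -
    have S0: "S (k+1) \<ge> 0" by (simp add: S_def sum_nonneg)
    have "\<gamma> * (K * S (k+1)) \<le> (1/2) * (20/3)"
      using SB1 assms(2,3) S0 K0 by (intro mult_mono) auto
    then have "K * (\<gamma> * S (k+1)) \<le> 10/3" by (simp add: algebra_simps)
    then have "\<gamma> * S (k+1) \<le> (10/3) / K" using K0 by (simp add: field_simps)
    then have "T * (\<gamma> * S (k+1)) \<le> T * ((10/3) / K)" by (rule mult_left_mono[OF _ less_imp_le[OF T0]])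
    then show ?thesis by (simp add: mult.assoc)
  qed
  have "T * (10/3) / K + T * (20/3) / K = T * 10 / K" by (simp add: field_simps)
  then show ?thesis using A A2 B R by linarith
qed

end
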